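(* Let $d\ge1$, let $G$ be a graph on $[n]$, and let $A\subset[n]$ be a vertex subset that induces a clique in the $d$-rigidity closure $C_d(G)$. Then $C_{d,A}(G)\subseteq C_d(G)$.
   Context: Fix a generic $\mathbf p:[n]\to\mathbb R^d$ (coordinates algebraically independent over $\mathbb Q$). For $x\ne y\in[n]$ let $\mathbf r_{xy}\in\mathbb R^{dn}$ have $(\mathbf p(x)-\mathbf p(y))^T$ in the $d$ coordinates of $x$, $(\mathbf p(y)-\mathbf p(x))^T$ in those of $y$, and $0$ elsewhere. $C_d(G)$ is the graph on $[n]$ with edge set $\{f\in\binom{[n]}2:\mathbf r_f\in\operatorname{span}_{\mathbb R}(\mathbf r_e:e\in G)\}$. For $A\subseteq[n]$, let $V_A=\operatorname{span}_{\mathbb R}(\mathbf r_e: e\in\binom A2)$, let $W_A$ be its orthogonal complement in $\mathbb R^{dn}$, and $P_{W_A}$ the orthogonal projection onto $W_A$. Then $C_{d,A}(G)=\{f\in\binom{[n]}2\setminus\binom A2: P_{W_A}\mathbf r_f\in\operatorname{span}_{\mathbb R}(P_{W_A}\mathbf r_e: e\in G)\}$. *)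

theory Defs
  imports "HOL-Analysis.Analysis"
begin

text \<open>Vertex set [n] is modelled by a finite type 'v (n = CARD('v)); R^d by real^'d
  (d = CARD('d) >= 1 automatically); R^{dn} by real^('v \<times> 'd).\<close>

text \<open>Algebraic independence over Q of a finite family of reals: no nonzero polynomial
  with rational coefficients vanishes at it (polynomials written as finite sums of monomials,
  a monomial being an exponent vector 'i => nat).\<close>
definition alg_indep_Q :: "('i::finite \<Rightarrow> real) \<Rightarrow> bool" where
  "alg_indep_Q x \<longleftrightarrow>
     (\<forall>(M :: ('i \<Rightarrow> nat) set) (c :: ('i \<Rightarrow> nat) \<Rightarrow> rat).
        finite M \<longrightarrow> (\<exists>m\<in>M. c m \<noteq> 0) \<longrightarrow>
        (\<Sum>m\<in>M. of_rat (c m) * (\<Prod>i\<in>UNIV. x i ^ m i)) \<noteq> 0)"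

definition generic :: "('v::finite \<Rightarrow> real^'d) \<Rightarrow> bool" where
  "generic p \<longleftrightarrow> alg_indep_Q (\<lambda>(v, k). p v $ k)"

definition rvec :: "('v::finite \<Rightarrow> real^'d) \<Rightarrow> 'v \<Rightarrow> 'v \<Rightarrow> real^('v \<times> 'd)" where
  "rvec p x y = (\<chi> vk. if fst vk = x then p x $ snd vk - p y $ snd vk
                          else if fst vk = y then p y $ snd vk - p x $ snd vk else 0)"

text \<open>Edges: 2-element vertex sets. A graph is a set of edges.\<close>
definition edges_of :: "'v set \<Rightarrow> 'v set set" where
  "edges_of A = {e. e \<subseteq> A \<and> card e = 2}"

definition rvecs :: "('v::finite \<Rightarrow> real^'d) \<Rightarrow> 'v set set \<Rightarrow> (real^('v \<times> 'd)) set" where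
  "rvecs p E = {rvec p x y | x y. x \<noteq> y \<and> {x, y} \<in> E}"

definition rigidity_closure :: "('v::finite \<Rightarrow> real^'d) \<Rightarrow> 'v set set \<Rightarrow> 'v set set" where
  "rigidity_closure p G = {{x, y} | x y. x \<noteq> y \<and> rvec p x y \<in> span (rvecs p G)}"

definition V_sub :: "('v::finite \<Rightarrow> real^'d) \<Rightarrow> 'v set \<Rightarrow> (real^('v \<times> 'd)) set" where
  "V_sub p A = span (rvecs p (edges_of A))"

definition W_sub :: "('v::finite \<Rightarrow> real^'d) \<Rightarrow> 'v set \<Rightarrow> (real^('v \<times> 'd)) set" where
  "W_sub p A = orthogonal_comp (V_sub p A)"

text \<open>Orthogonal projection onto a (finite-dimensional, hence closed) subspace S.\<close>
definition orth_proj :: "('a::euclidean_space) set \<Rightarrow> 'a \<Rightarrow> 'a" where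
  "orth_proj S v = (THE w. w \<in> S \<and> v - w \<in> orthogonal_comp S)"

definition rel_rigidity_closure ::
  "('v::finite \<Rightarrow> real^'d) \<Rightarrow> 'v set \<Rightarrow> 'v set set \<Rightarrow> 'v set set" where
  "rel_rigidity_closure p A G =
     {{x, y} | x y. x \<noteq> y \<and> {x, y} \<notin> edges_of A \<and>
        orth_proj (W_sub p A) (rvec p x y)
          \<in> span (orth_proj (W_sub p A) ` rvecs p G)}"

end

theory Submission
  imports Defs
begin

lemma proj_decomp:
  fixes V :: "'a::euclidean_space set"
  assumes sV: "subspace V"
  shows "v - orth_proj (orthogonal_comp V) v \<in> V"
proof -
  obtain y z where y: "y \<in> span V" and z: "\<And>w. w \<in> span V \<Longrightarrow> orthogonal z w"
    and vyz: "v = y + z"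
    using orthogonal_subspace_decomp_exists[of V v] by blast
  have yV: "y \<in> V" using y sV span_eq_iff by blast
  have zV: "z \<in> orthogonal_comp V"
    using z span_base unfolding orthogonal_comp_def by (auto simp: orthogonal_commute)
  have cc: "orthogonal_comp (orthogonal_comp V) = V" using orthogonal_comp_self[OF sV] .
  have "orth_proj (orthogonal_comp V) v = z"
    unfolding orth_proj_def
  proof (rule the_equality)
    show "z \<in> orthogonal_comp V \<and> v - z \<in> orthogonal_comp (orthogonal_comp V)"
      using zV yV cc vyz by simp
  next
    fix w assume w: "w \<in> orthogonal_comp V \<and> v - w \<in> orthogonal_comp (orthogonal_comp V)"
    have d1: "z - w \<in> V"
    proof -
      have "z - w = (v - w) - y" using vyz by (simp add: algebra_simps)
      moreover have "(v - w) - y \<in> V" using w cc yV sV by (simp add: subspace_diff)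
      ultimately show ?thesis by metis
    qed
    have d2: "z - w \<in> orthogonal_comp V"
      using subspace_diff[OF subspace_orthogonal_comp zV conjunct1[OF w]] .
    have "orthogonal (z - w) (z - w)"
      using d1 d2 unfolding orthogonal_comp_def by (auto simp: orthogonal_commute)
    then show "w = z" by (simp add: orthogonal_self)
  qed
  then show ?thesis using yV vyz by simp
qed

lemma rvec_swap: "rvec p y x = rvec p x y"
proof -
  have "rvec p y x $ i = rvec p x y $ i" for i
    by (cases i) (simp add: rvec_def)
  then show ?thesis by (simp add: vec_eq_iff)
qed

theorem claim2p5:
  fixes p :: "'v::finite \<Rightarrow> real^'d"
    and G :: "'v set set"
    and A :: "'v set"
  assumes "generic p"
    and "G \<subseteq> edges_of UNIV"
    and "edges_of A \<subseteq> rigidity_closure p G"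
  shows "rel_rigidity_closure p A G \<subseteq> rigidity_closure p G"
proof
  let ?S = "span (rvecs p G)"
  let ?V = "V_sub p A"
  let ?P = "orth_proj (W_sub p A)"
  have sV: "subspace ?V" unfolding V_sub_def by simp
  have VS: "?V \<subseteq> ?S"
    unfolding V_sub_def
  proof (rule span_minimal)
    show "subspace ?S" by simp
    show "rvecs p (edges_of A) \<subseteq> ?S"
    proof
      fix r assume "r \<in> rvecs p (edges_of A)"
      then obtain x y where r: "r = rvec p x y" "x \<noteq> y" "{x, y} \<in> edges_of A"
        unfolding rvecs_def by blast
      then have "{x, y} \<in> rigidity_closure p G" using assms(3) by blast
      then obtain x' y' where e: "{x, y} = {x', y'}" "rvec p x' y' \<in> ?S"
        unfolding rigidity_closure_def by blast
      show "r \<in> ?S"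
      proof (cases "x = x'")
        case True
        then have "y = y'" using e(1) r(2) by (metis doubleton_eq_iff)
        then show ?thesis using True r e by simp
      next
        case False
        then have "x = y'" "y = x'" using e(1) by (metis doubleton_eq_iff)+
        then show ?thesis using r e rvec_swap[of p x y] by simp
      qed
    qed
  qed
  have dec: "v - ?P v \<in> ?V" for v
    using proj_decomp[OF sV, of v] unfolding W_sub_def by simp
  have PS: "?P ` rvecs p G \<subseteq> ?S"
  proof
    fix u assume "u \<in> ?P ` rvecs p G"
    then obtain r where r: "r \<in> rvecs p G" "u = ?P r" by blast
    have a1: "r - ?P r \<in> ?S" using subsetD[OF VS dec] .
    have a2: "r \<in> ?S" using r(1) span_base by blast
    have "r - (r - ?P r) \<in> ?S" using span_diff[OF a2 a1] .
    moreover have "r - (r - ?P r) = u" using r(2) by simp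
    ultimately show "u \<in> ?S" by simp
  qed
  have spanPS: "span (?P ` rvecs p G) \<subseteq> ?S"
    using PS by (simp add: span_minimal)
  fix e assume "e \<in> rel_rigidity_closure p A G"
  then obtain x y where e: "e = {x, y}" "x \<noteq> y"
    "?P (rvec p x y) \<in> span (?P ` rvecs p G)"
    unfolding rel_rigidity_closure_def by blast
  have b1: "?P (rvec p x y) \<in> ?S" using e(3) spanPS by blast
  have b2: "rvec p x y - ?P (rvec p x y) \<in> ?S" using subsetD[OF VS dec] .
  have "?P (rvec p x y) + (rvec p x y - ?P (rvec p x y)) \<in> ?S"
    using span_add[OF b1 b2] .
  then have "rvec p x y \<in> ?S" by simp
  then show "e \<in> rigidity_closure p G"
    unfolding rigidity_closure_def using e by blast
qed

end
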